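(* The signature of any matchings circuit is windable.
   Context: A matchings circuit $G$ consists of: a finite set $J$ of incidences; a finite vertex set $V$ with sets $J_v$ partitioning $J$; a set $A\subseteq J$ of external edges; a partition $E$ of $J\setminus A$ into pairs (internal edges); a rational edge-weight $w(e)\ge0$ for each $e\in E$; and a rational fugacity $\lambda(v)\ge0$ for each $v$. For $F\subseteq A\cup E$, $\deg_F(v)$ is the number of incidences in $J_v$ belonging to edges of $F$; $\mathrm{wt}_G(F)=0$ if some $\deg_F(v)\ge2$, else $\prod_{v:\deg_F(v)=0}\lambda(v)\prod_{e\in F\cap E}w(e)$. The signature $[\![G]\!]:\{0,1\}^A\to\mathbb{Q}_{\ge0}$ is $[\![G]\!](x)=\sum\mathrm{wt}_G(F)$ over $F\subseteq A\cup E$ with $F\cap A=\{a:x_a=1\}$. For $x,y\in\{0,1\}^A$, $x\oplus y$ is coordinatewise addition mod 2, $\mathbf S$ the characteristic vector of $S$; $\mathrm{Match}'(z)$ is the set of partitions of $\{i:z_i=1\}$ into blocks of size 1 or 2. $F:\{0,1\}^A\to\mathbb{Q}_{\ge0}$ is windable if there exist $B(x,y,M)\ge0$ for all $x,y$ and $M\in\mathrm{Match}'(x\oplus y)$ with $F(x)F(y)=\sum_{M\in\mathrm{Match}'(x\oplus y)}B(x,y,M)$ for all $x,y$, and $B(x,y,M)=B(x\oplus\mathbf S,y\oplus\mathbf S,M)$ for all $x,y$ and all $S\in M\in\mathrm{Match}'(x\oplus y)$. *)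

theory Defs
  imports Main "HOL.Rat"
begin

text \<open>A matchings circuit: incidences J, vertices V, the map inc sending each incidence
to its vertex (so J_v = {j \<in> J. inc j = v}), external edges A \<subseteq> J, internal edges E
(a partition of J - A into 2-element sets), edge weights w and fugacities lam.\<close>

definition matchings_circuit ::
  "'j set \<Rightarrow> 'v set \<Rightarrow> ('j \<Rightarrow> 'v) \<Rightarrow> 'j set \<Rightarrow> 'j set set \<Rightarrow> ('j set \<Rightarrow> rat) \<Rightarrow> ('v \<Rightarrow> rat) \<Rightarrow> bool"
  where "matchings_circuit J V inc A E w lam \<longleftrightarrow>
     finite J \<and> finite V \<and> (\<forall>j\<in>J. inc j \<in> V) \<and> A \<subseteq> J \<and>
     (\<forall>e\<in>E. e \<subseteq> J - A \<and> card e = 2) \<and>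
     (\<forall>e\<in>E. \<forall>e'\<in>E. e \<noteq> e' \<longrightarrow> e \<inter> e' = {}) \<and>
     \<Union>E = J - A \<and>
     (\<forall>e\<in>E. w e \<ge> 0) \<and> (\<forall>v\<in>V. lam v \<ge> 0)"

text \<open>A subset F of A \<union> E is given by its external part FA \<subseteq> A and internal part FE \<subseteq> E.\<close>

definition deg :: "'j set \<Rightarrow> ('j \<Rightarrow> 'v) \<Rightarrow> 'j set \<Rightarrow> 'j set set \<Rightarrow> 'v \<Rightarrow> nat"
  where "deg J inc FA FE v = card {j \<in> J. inc j = v \<and> (j \<in> FA \<or> (\<exists>e\<in>FE. j \<in> e))}"

definition wt ::
  "'j set \<Rightarrow> 'v set \<Rightarrow> ('j \<Rightarrow> 'v) \<Rightarrow> ('j set \<Rightarrow> rat) \<Rightarrow> ('v \<Rightarrow> rat) \<Rightarrow> 'j set \<Rightarrow> 'j set set \<Rightarrow> rat"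
  where "wt J V inc w lam FA FE =
     (if \<exists>v\<in>V. deg J inc FA FE v \<ge> 2 then 0
      else (\<Prod>v\<in>{v\<in>V. deg J inc FA FE v = 0}. lam v) * (\<Prod>e\<in>FE. w e))"

text \<open>The signature, with x \<in> {0,1}^A represented by the set X = {a. x_a = 1} \<subseteq> A.\<close>

definition signature ::
  "'j set \<Rightarrow> 'v set \<Rightarrow> ('j \<Rightarrow> 'v) \<Rightarrow> 'j set \<Rightarrow> 'j set set \<Rightarrow> ('j set \<Rightarrow> rat) \<Rightarrow> ('v \<Rightarrow> rat) \<Rightarrow> 'j set \<Rightarrow> rat"
  where "signature J V inc A E w lam X = (\<Sum>FE\<in>Pow E. wt J V inc w lam X FE)"

definition Match' :: "'a set \<Rightarrow> 'a set set set"
  where "Match' Z = {M. (\<forall>S\<in>M. S \<subseteq> Z \<and> (card S = 1 \<or> card S = 2)) \<and>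
                        (\<forall>S\<in>M. \<forall>T\<in>M. S \<noteq> T \<longrightarrow> S \<inter> T = {}) \<and> \<Union>M = Z}"

text \<open>Windability of F : {0,1}^A \<rightarrow> Q (vectors as subsets of A; x \<oplus> y is symmetric difference).\<close>

definition windable :: "'a set \<Rightarrow> ('a set \<Rightarrow> rat) \<Rightarrow> bool"
  where "windable A F \<longleftrightarrow>
    (\<exists>B :: 'a set \<Rightarrow> 'a set \<Rightarrow> 'a set set \<Rightarrow> rat.
       (\<forall>X\<subseteq>A. \<forall>Y\<subseteq>A. \<forall>M\<in>Match' ((X - Y) \<union> (Y - X)). B X Y M \<ge> 0) \<and>
       (\<forall>X\<subseteq>A. \<forall>Y\<subseteq>A. F X * F Y = (\<Sum>M\<in>Match' ((X - Y) \<union> (Y - X)). B X Y M)) \<and>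
       (\<forall>X\<subseteq>A. \<forall>Y\<subseteq>A. \<forall>M\<in>Match' ((X - Y) \<union> (Y - X)). \<forall>S\<in>M.
          B X Y M = B ((X - S) \<union> (S - X)) ((Y - S) \<union> (S - Y)) M))"

end

theory Submission
  imports Defs
begin


definition rorb :: "('a \<Rightarrow> 'a) \<Rightarrow> 'a \<Rightarrow> 'a set" where
  "rorb \<rho> a = range (\<lambda>k. (\<rho>^^k) a)"

lemma pow_split: "m \<le> N \<Longrightarrow> (\<rho>^^N) y = (\<rho>^^(N - m)) ((\<rho>^^m) y)"
proof -
  assume "m \<le> N"
  then have "N = (N - m) + m" by simp
  then have "(\<rho>^^N) y = (\<rho>^^((N - m) + m)) y" by simp
  also have "\<dots> = (\<rho>^^(N - m)) ((\<rho>^^m) y)" by (simp add: funpow_add)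
  finally show ?thesis .
qed

lemma period:
  assumes "inj \<rho>" "finite (rorb \<rho> a)"
  shows "\<exists>n>0. (\<rho>^^n) a = a"
proof -
  have "\<not> inj (\<lambda>k. (\<rho>^^k) a)"
    using assms(2) unfolding rorb_def using finite_imageD infinite_UNIV_nat by blast
  then obtain i j where ij: "i \<noteq> j" "(\<rho>^^i) a = (\<rho>^^j) a" unfolding inj_def by blast
  have gen: "(\<rho>^^(j - i)) a = a" if "i < j" "(\<rho>^^i) a = (\<rho>^^j) a" for i j
  proof -
    have "(\<rho>^^i) ((\<rho>^^(j - i)) a) = (\<rho>^^j) a"
      using that pow_split[of "j - i" j \<rho> a] by simp
    then have "(\<rho>^^i) ((\<rho>^^(j - i)) a) = (\<rho>^^i) a" using that by simp
    then show ?thesis using inj_fn[OF assms(1), of i] unfolding inj_def by blast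
  qed
  show ?thesis
  proof (cases "i < j")
    case True then have "(\<rho>^^(j - i)) a = a" "j - i > 0" using gen ij by auto
    then show ?thesis by blast
  next
    case False then have "j < i" using ij by simp
    then have "(\<rho>^^(i - j)) a = a" "i - j > 0" using gen[of j i] ij by auto
    then show ?thesis by blast
  qed
qed

lemma funpow_mult_fix: "(\<rho>^^n) a = a \<Longrightarrow> (\<rho>^^(n*k)) a = a"
  by (induction k) (simp_all add: funpow_add)

lemma rorb_back:
  assumes "inj \<rho>" "finite (rorb \<rho> a)" "x = (\<rho>^^k) a"
  shows "\<exists>m. (\<rho>^^m) x = a"
proof -
  obtain n where n: "n > 0" "(\<rho>^^n) a = a" using period[OF assms(1,2)] by blast
  have "k \<le> n*k" using n by simp
  then have "(\<rho>^^(n*k - k)) x = (\<rho>^^(n*k)) a"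
    using assms(3) pow_split[of k "n*k" \<rho> a] by simp
  moreover have "(\<rho>^^(n*k)) a = a" by (rule funpow_mult_fix[OF n(2)])
  ultimately have "(\<rho>^^(n*k - k)) x = a" by simp
  then show ?thesis by blast
qed

lemma rorb_eq:
  assumes "inj \<rho>" "finite (rorb \<rho> a)" "x \<in> rorb \<rho> a"
  shows "rorb \<rho> x = rorb \<rho> a"
proof -
  obtain k where k: "x = (\<rho>^^k) a" using assms(3) unfolding rorb_def by blast
  obtain m where m: "(\<rho>^^m) x = a" using rorb_back[OF assms(1,2) k] by blast
  have 1: "rorb \<rho> x \<subseteq> rorb \<rho> a"
  proof
    fix y assume "y \<in> rorb \<rho> x"
    then obtain j where "y = (\<rho>^^j) x" unfolding rorb_def by blast
    then have "y = (\<rho>^^(j+k)) a" using k by (simp add: funpow_add)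
    then show "y \<in> rorb \<rho> a" unfolding rorb_def by blast
  qed
  have 2: "rorb \<rho> a \<subseteq> rorb \<rho> x"
  proof
    fix y assume "y \<in> rorb \<rho> a"
    then obtain j where "y = (\<rho>^^j) a" unfolding rorb_def by blast
    then have "y = (\<rho>^^(j+m)) x" using m by (simp add: funpow_add)
    then show "y \<in> rorb \<rho> x" unfolding rorb_def by blast
  qed
  show ?thesis using 1 2 by blast
qed

lemma sigma_pow':
  assumes "\<And>x. \<sigma> (\<sigma> x) = x" "\<And>x. \<rho> x = \<tau> (\<sigma> x)" "\<And>x. \<rho>' x = \<sigma> (\<tau> x)"
  shows "\<sigma> ((\<rho>^^k) x) = (\<rho>'^^k) (\<sigma> x)"
proof (induction k arbitrary: x)
  case 0 then show ?case by simp
next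
  case (Suc k)
  have "\<sigma> ((\<rho>^^Suc k) x) = \<sigma> ((\<rho>^^k) (\<rho> x))"
    by (simp add: funpow_Suc_right del: funpow.simps)
  also have "\<dots> = (\<rho>'^^k) (\<sigma> (\<rho> x))" using Suc by simp
  also have "\<dots> = (\<rho>'^^k) (\<rho>' (\<sigma> x))" using assms by simp
  also have "\<dots> = (\<rho>'^^Suc k) (\<sigma> x)"
    by (simp add: funpow_Suc_right del: funpow.simps)
  finally show ?case .
qed

lemma sigma_pow:
  assumes "\<And>x. \<sigma> (\<sigma> x) = x"
  shows "\<sigma> (((\<tau> \<circ> \<sigma>)^^k) x) = ((\<sigma> \<circ> \<tau>)^^k) (\<sigma> x)"
  by (rule sigma_pow'[OF assms]) simp_all

lemma pow_cancel':
  assumes "\<And>x. \<sigma> (\<sigma> x) = x" "\<And>x. \<tau> (\<tau> x) = x" "\<And>x. \<rho> x = \<tau> (\<sigma> x)" "\<And>x. \<rho>' x = \<sigma> (\<tau> x)"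
  shows "(\<rho>^^k) ((\<rho>'^^k) x) = x"
proof (induction k arbitrary: x)
  case 0 then show ?case by simp
next
  case (Suc k)
  have e1: "(\<rho>^^Suc k) y = (\<rho>^^k) (\<rho> y)" for y
    by (simp add: funpow_Suc_right del: funpow.simps)
  have "(\<rho>^^Suc k) ((\<rho>'^^Suc k) x) = (\<rho>^^k) (\<rho> (\<rho>' ((\<rho>'^^k) x)))"
    unfolding e1 by simp
  also have "\<dots> = (\<rho>^^k) ((\<rho>'^^k) x)" using assms by simp
  also have "\<dots> = x" using Suc by simp
  finally show ?case .
qed

lemma pow_cancel:
  assumes "\<And>x. \<sigma> (\<sigma> x) = x" "\<And>x. \<tau> (\<tau> x) = x"
  shows "((\<tau> \<circ> \<sigma>)^^k) (((\<sigma> \<circ> \<tau>)^^k) x) = x"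
  by (rule pow_cancel'[OF assms]) simp_all

lemma inv_inj: "(\<And>x. \<sigma> (\<sigma> x) = x) \<Longrightarrow> inj \<sigma>"
  by (metis injI)

lemma dih_closed:
  assumes s: "\<And>x. \<sigma> (\<sigma> x) = x" and t: "\<And>x. \<tau> (\<tau> x) = x"
    and fin: "finite (rorb (\<tau> \<circ> \<sigma>) a)" and fa: "\<sigma> a = a" and x: "x \<in> rorb (\<tau> \<circ> \<sigma>) a"
  shows "\<sigma> x \<in> rorb (\<tau> \<circ> \<sigma>) a" "\<tau> x \<in> rorb (\<tau> \<circ> \<sigma>) a"
proof -
  let ?r = "\<tau> \<circ> \<sigma>"
  have injr: "inj ?r" using inv_inj[of \<sigma>, OF s] inv_inj[of \<tau>, OF t] by (simp add: inj_compose)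
  obtain k where k: "x = (?r^^k) a" using x unfolding rorb_def by blast
  have "(?r^^k) (\<sigma> x) = a" using sigma_pow[where \<sigma>=\<sigma> and \<tau>=\<tau> and k=k and x=a, OF s] pow_cancel[OF s t] k fa by simp
  obtain n where n: "n > 0" "(?r^^n) a = a" using period[OF injr fin] by blast
  have kk: "k \<le> n*k" using n by simp
  have "(?r^^(n*k)) a = (?r^^(n*k - (n*k - k))) ((?r^^(n*k - k)) a)"
    by (rule pow_split) simp
  also have "n*k - (n*k - k) = k" using kk by simp
  finally have "(?r^^k) ((?r^^(n*k - k)) a) = (?r^^(n*k)) a" by (simp add: comp_def)
  also have "\<dots> = a" using funpow_mult_fix[OF n(2)] .
  also have "a = (?r^^k) (\<sigma> x)" using \<open>(?r^^k) (\<sigma> x) = a\<close> by simp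
  finally have eqs: "(?r^^(n*k - k)) a = \<sigma> x"
    by (rule injD[OF inj_fn[OF injr]])
  show 1: "\<sigma> x \<in> rorb ?r a" unfolding rorb_def
    by (rule range_eqI[where x="n*k - k"]) (simp add: eqs)
  have "\<tau> x = ?r (\<sigma> x)" using s by simp
  also have "\<dots> = (?r^^(Suc (n*k - k))) a" using eqs by simp
  finally show "\<tau> x \<in> rorb ?r a" unfolding rorb_def
    by (rule range_eqI)
qed

lemma dih_fix:
  assumes s: "\<And>x. \<sigma> (\<sigma> x) = x" and t: "\<And>x. \<tau> (\<tau> x) = x"
    and fin: "finite (rorb (\<tau> \<circ> \<sigma>) a)" and fa: "\<sigma> a = a"
  shows "card {x \<in> rorb (\<tau> \<circ> \<sigma>) a. \<sigma> x = x} \<le> 2"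
proof -
  let ?r = "\<tau> \<circ> \<sigma>"
  have injr: "inj ?r" using inv_inj[of \<sigma>, OF s] inv_inj[of \<tau>, OF t] by (simp add: inj_compose)
  define n where "n = (LEAST n. n > 0 \<and> (?r^^n) a = a)"
  have n: "n > 0" "(?r^^n) a = a" using period[OF injr fin] LeastI_ex[of "\<lambda>n. n > 0 \<and> (?r^^n) a = a"]
    unfolding n_def by blast+
  have nmin: "\<And>m. 0 < m \<Longrightarrow> m < n \<Longrightarrow> (?r^^m) a \<noteq> a"
    unfolding n_def using not_less_Least by blast
  have modk: "(?r^^k) a = (?r^^(k mod n)) a" for k
  proof -
    have "(?r^^k) a = (?r^^(k mod n + n * (k div n))) a" by simp
    also have "\<dots> = (?r^^(k mod n)) ((?r^^(n * (k div n))) a)" by (simp only: funpow_add comp_apply)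
    finally have "(?r^^k) a = (?r^^(k mod n)) ((?r^^(n * (k div n))) a)" .
    then show ?thesis using funpow_mult_fix[OF n(2)] by simp
  qed
  have "{x \<in> rorb ?r a. \<sigma> x = x} \<subseteq> {a, (?r^^(n div 2)) a}"
  proof
    fix x assume "x \<in> {x \<in> rorb ?r a. \<sigma> x = x}"
    then obtain k where k: "x = (?r^^k) a" "\<sigma> x = x" unfolding rorb_def by blast
    define r where "r = k mod n"
    have rn: "r < n" using n(1) r_def by simp
    have xr: "x = (?r^^r) a" using k(1) modk[of k] r_def by simp
    have "(?r^^r) (\<sigma> x) = a" using sigma_pow[where \<sigma>=\<sigma> and \<tau>=\<tau> and k=r and x=a, OF s] pow_cancel[OF s t] xr fa by simp
    then have "(?r^^r) x = a" using k by simp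
    then have r2: "(?r^^(r + r)) a = a" using xr by (simp add: funpow_add)
    consider "r + r = 0" | "0 < r + r \<and> r + r < n" | "r + r = n" | "n < r + r" by linarith
    then show "x \<in> {a, (?r^^(n div 2)) a}"
    proof cases
      case 1 then show ?thesis using xr by simp
    next
      case 2
      then have "(?r^^(r + r)) a \<noteq> a" by (intro nmin) auto
      then show ?thesis using r2 by contradiction
    next
      case 3 then have "r = n div 2" by simp
      then show ?thesis using xr by simp
    next
      case 4
      have "(?r^^(r + r)) a = (?r^^(r + r - n)) ((?r^^n) a)"
        using 4 pow_split[of n "r + r" ?r a] by simp
      then have "(?r^^(r + r - n)) a = a" using n(2) r2 by simp
      then show ?thesis using nmin[of "r + r - n"] 4 rn by simp
    qed
  qed
  then have "card {x \<in> rorb ?r a. \<sigma> x = x} \<le> card {a, (?r^^(n div 2)) a}"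
    by (intro card_mono) auto
  also have "\<dots> \<le> 2" by (simp add: card_insert_if)
  finally show ?thesis .
qed



locale mc =
  fixes J :: "'j set" and V :: "'v set" and inc :: "'j \<Rightarrow> 'v" and A :: "'j set"
    and E :: "'j set set" and w :: "'j set \<Rightarrow> rat" and lam :: "'v \<Rightarrow> rat"
  assumes circ: "matchings_circuit J V inc A E w lam"
begin

lemma cs1: "finite J"
  using circ unfolding matchings_circuit_def by (elim conjE) assumption
lemma cs2: "finite V"
  using circ unfolding matchings_circuit_def by (elim conjE) assumption
lemma cs3: "\<forall>j\<in>J. inc j \<in> V"
  using circ unfolding matchings_circuit_def by (elim conjE) assumption
lemma cs4: "A \<subseteq> J"
  using circ unfolding matchings_circuit_def by (elim conjE) assumption
lemma cs5: "\<forall>e\<in>E. e \<subseteq> J - A \<and> card e = 2"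
  using circ unfolding matchings_circuit_def by (elim conjE) assumption
lemma cs6: "\<forall>e\<in>E. \<forall>e'\<in>E. e \<noteq> e' \<longrightarrow> e \<inter> e' = {}"
  using circ unfolding matchings_circuit_def by (elim conjE) assumption
lemma cs7: "\<Union>E = J - A"
  using circ unfolding matchings_circuit_def by (elim conjE) assumption
lemma cs8: "\<forall>e\<in>E. w e \<ge> 0"
  using circ unfolding matchings_circuit_def by (elim conjE) assumption
lemma cs9: "\<forall>v\<in>V. lam v \<ge> 0"
  using circ unfolding matchings_circuit_def by (elim conjE) assumption
lemmas cs = cs1 cs2 cs3 cs4 cs5 cs6 cs7 cs8 cs9

lemma finJ: "finite J" by (rule cs(1))
lemma finV: "finite V" by (rule cs(2))
lemma incV: "j \<in> J \<Longrightarrow> inc j \<in> V" using cs(3) by blast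
lemma AJ: "A \<subseteq> J" by (rule cs(4))
lemma Esub: "e \<in> E \<Longrightarrow> e \<subseteq> J - A" using cs(5) by blast
lemma Ecard: "e \<in> E \<Longrightarrow> card e = 2" using cs(5) by blast
lemma Edisj: "e \<in> E \<Longrightarrow> e' \<in> E \<Longrightarrow> e \<noteq> e' \<Longrightarrow> e \<inter> e' = {}"
  using cs(6) by blast
lemma EU: "\<Union>E = J - A" by (rule cs(7))
lemma wnn: "e \<in> E \<Longrightarrow> w e \<ge> 0" using cs(8) by blast
lemma lamnn: "v \<in> V \<Longrightarrow> lam v \<ge> 0" using cs(9) by blast
lemma finE: "finite E"
proof -
  have "E \<subseteq> Pow J" using Esub by blast
  then show ?thesis using finJ by (meson finite_Pow_iff finite_subset)
qed
lemma Eunique: "e \<in> E \<Longrightarrow> e' \<in> E \<Longrightarrow> j \<in> e \<Longrightarrow> j \<in> e' \<Longrightarrow> e = e'"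
  using Edisj by blast

definition cov :: "'j set \<Rightarrow> 'j set set \<Rightarrow> 'j set" where "cov X FE = X \<union> \<Union>FE"
definition good :: "'j set \<Rightarrow> 'j set set \<Rightarrow> bool" where
  "good X FE \<longleftrightarrow> (\<forall>v\<in>V. deg J inc X FE v \<le> 1)"

lemma deg_cov: "deg J inc X FE v = card {j\<in>J. inc j = v \<and> j \<in> cov X FE}"
  unfolding deg_def cov_def by simp

lemma good_inj:
  assumes "good X FE" "j1 \<in> J" "j2 \<in> J" "inc j1 = inc j2" "j1 \<in> cov X FE" "j2 \<in> cov X FE"
  shows "j1 = j2"
proof -
  let ?S = "{j\<in>J. inc j = inc j1 \<and> j \<in> cov X FE}"
  have "card ?S \<le> 1" using assms(1,2) incV unfolding good_def deg_cov by blast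
  moreover have "finite ?S" using finJ by simp
  ultimately show ?thesis using assms card_le_Suc0_iff_eq[of ?S] by auto
qed

lemma wt_good: "good X FE \<Longrightarrow> wt J V inc w lam X FE =
   (\<Prod>v\<in>{v\<in>V. deg J inc X FE v = 0}. lam v) * (\<Prod>e\<in>FE. w e)"
proof -
  assume "good X FE"
  then have "\<not> (\<exists>v\<in>V. deg J inc X FE v \<ge> 2)" unfolding good_def by fastforce
  then show ?thesis unfolding wt_def by simp
qed

lemma wt_bad: "\<not> good X FE \<Longrightarrow> wt J V inc w lam X FE = 0"
proof -
  assume "\<not> good X FE"
  then have "\<exists>v\<in>V. deg J inc X FE v \<ge> 2" unfolding good_def by fastforce
  then show ?thesis unfolding wt_def by simp
qed

lemma wt_nn: "FE \<subseteq> E \<Longrightarrow> wt J V inc w lam X FE \<ge> 0"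
  unfolding wt_def using wnn lamnn by (auto intro!: mult_nonneg_nonneg prod_nonneg)

lemma cov_edge:
  assumes "X \<subseteq> A" "FE \<subseteq> E" "e \<in> E" "j \<in> e"
  shows "j \<in> cov X FE \<longleftrightarrow> e \<in> FE"
proof -
  have "j \<notin> A" using Esub assms by blast
  then show ?thesis unfolding cov_def using assms Eunique by blast
qed

lemma cov_A:
  assumes "FE \<subseteq> E" "j \<in> A"
  shows "j \<in> cov X FE \<longleftrightarrow> j \<in> X"
  using assms Esub unfolding cov_def by blast

definition emate :: "'j \<Rightarrow> 'j" where
  "emate j = (THE j'. \<exists>e\<in>E. j \<in> e \<and> j' \<in> e \<and> j' \<noteq> j)"

lemma emate:
  assumes "e \<in> E" "j \<in> e"
  shows "emate j \<in> e" "emate j \<noteq> j" "\<And>j'. j' \<in> e \<Longrightarrow> j' \<noteq> j \<Longrightarrow> j' = emate j"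
proof -
  obtain x y where xy: "e = {x, y}" "x \<noteq> y" using Ecard[OF assms(1)] unfolding card_2_iff by blast
  define om where "om = (if j = x then y else x)"
  have om: "om \<in> e" "om \<noteq> j" using xy assms(2) om_def by auto
  have oth: "j' = om" if "j' \<in> e" "j' \<noteq> j" for j' using that xy assms(2) om_def by auto
  have "emate j = om" unfolding emate_def
  proof (rule the_equality)
    show "\<exists>e\<in>E. j \<in> e \<and> om \<in> e \<and> om \<noteq> j" using om assms by blast
    fix j' assume "\<exists>e\<in>E. j \<in> e \<and> j' \<in> e \<and> j' \<noteq> j"
    then obtain e' where "e' \<in> E" "j \<in> e'" "j' \<in> e'" "j' \<noteq> j" by blast
    then have "e' = e" using Eunique[of e' e j] assms by blast
    then show "j' = om" using oth[of j'] \<open>j' \<in> e'\<close> \<open>j' \<noteq> j\<close> by blast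
  qed
  then show "emate j \<in> e" "emate j \<noteq> j" using om by simp_all
  show "\<And>j'. j' \<in> e \<Longrightarrow> j' \<noteq> j \<Longrightarrow> j' = emate j"
    using oth \<open>emate j = om\<close> by metis
qed

definition ecl :: "'j set \<Rightarrow> bool" where
  "ecl D \<longleftrightarrow> (\<forall>e\<in>E. \<forall>j\<in>e. \<forall>j'\<in>e. j \<in> D \<longrightarrow> j' \<in> D)"
definition vok :: "'j set \<Rightarrow> bool" where
  "vok D \<longleftrightarrow> (\<forall>j1\<in>D. \<forall>j2\<in>D. \<forall>j3\<in>D. inc j1 = inc j2 \<and> inc j2 = inc j3 \<longrightarrow> j1 = j2 \<or> j2 = j3 \<or> j1 = j3)"

definition sg :: "'j set \<Rightarrow> 'j \<Rightarrow> 'j" where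
  "sg D j = (if j \<in> D \<and> j \<in> \<Union>E then emate j else j)"
definition tu :: "'j set \<Rightarrow> 'j \<Rightarrow> 'j" where
  "tu D j = (if j \<in> D \<and> (\<exists>j'\<in>D. j' \<noteq> j \<and> inc j' = inc j)
     then (THE j'. j' \<in> D \<and> j' \<noteq> j \<and> inc j' = inc j) else j)"

lemma sg_edge: assumes "j \<in> D" "e \<in> E" "j \<in> e" "j' \<in> e" "j' \<noteq> j" shows "j' = sg D j"
proof -
  have "j \<in> \<Union>E" using assms by blast
  then have "sg D j = emate j" using assms(1) by (simp add: sg_def)
  then show ?thesis using emate(3)[OF assms(2,3,4,5)] by simp
qed

lemma sg_A: "j \<in> A \<Longrightarrow> sg D j = j"
  unfolding sg_def using EU by auto

lemma sg_D: assumes "ecl D" "j \<in> D" shows "sg D j \<in> D"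
proof (cases "j \<in> \<Union>E")
  case True
  then obtain e where e: "e \<in> E" "j \<in> e" by blast
  then have "emate j \<in> e" using emate by blast
  then show ?thesis using assms e unfolding sg_def ecl_def by auto
next
  case False then show ?thesis using assms unfolding sg_def by auto
qed

lemma sg_inv: assumes "ecl D" shows "sg D (sg D j) = j"
proof (cases "j \<in> D \<and> j \<in> \<Union>E")
  case True
  then obtain e where e: "e \<in> E" "j \<in> e" "j \<in> D" by blast
  have m: "emate j \<in> e" "emate j \<noteq> j" using emate e by auto
  have "emate j \<in> D" using assms e m unfolding ecl_def by blast
  then have "sg D (emate j) = emate (emate j)" unfolding sg_def using e m by auto
  also have "\<dots> = j" using emate(3)[OF e(1) m(1) e(2)] m(2) by simp
  finally show ?thesis using True sg_def by simp
next
  case False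
  then have "sg D j = j" unfolding sg_def by auto
  then show ?thesis by simp
qed

lemma tu_vert:
  assumes "vok D" "j \<in> D" "j' \<in> D" "j' \<noteq> j" "inc j' = inc j"
  shows "tu D j = j'"
proof -
  have "(THE j'. j' \<in> D \<and> j' \<noteq> j \<and> inc j' = inc j) = j'"
  proof (rule the_equality)
    show "j' \<in> D \<and> j' \<noteq> j \<and> inc j' = inc j" using assms by simp
    fix x assume "x \<in> D \<and> x \<noteq> j \<and> inc x = inc j"
    then show "x = j'" using assms unfolding vok_def by metis
  qed
  then show ?thesis unfolding tu_def using assms by auto
qed

lemma tu_D: assumes "vok D" "j \<in> D" shows "tu D j \<in> D"
proof (cases "\<exists>j'\<in>D. j' \<noteq> j \<and> inc j' = inc j")
  case True
  then obtain j' where "j' \<in> D" "j' \<noteq> j" "inc j' = inc j" by blast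
  then show ?thesis using tu_vert[OF assms(1,2)] by auto
next
  case False then show ?thesis using assms unfolding tu_def by auto
qed

lemma tu_inv: assumes "vok D" shows "tu D (tu D j) = j"
proof (cases "j \<in> D \<and> (\<exists>j'\<in>D. j' \<noteq> j \<and> inc j' = inc j)")
  case True
  then obtain j' where j': "j' \<in> D" "j' \<noteq> j" "inc j' = inc j" "j \<in> D" by blast
  then have "tu D j = j'" using tu_vert assms by blast
  moreover have "tu D j' = j" using tu_vert[OF assms j'(1) j'(4)] j' by simp
  ultimately show ?thesis by simp
next
  case False
  then have "tu D j = j" unfolding tu_def by auto
  then show ?thesis by simp
qed

end


context mc begin

definition Dset :: "'j set \<Rightarrow> 'j set set \<Rightarrow> 'j set \<Rightarrow> 'j set set \<Rightarrow> 'j set" where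
  "Dset X FE Y FE' = {j\<in>J. (j \<in> cov X FE) \<noteq> (j \<in> cov Y FE')}"

definition orb :: "'j set \<Rightarrow> 'j \<Rightarrow> 'j set" where "orb D a = rorb (tu D \<circ> sg D) a"

definition blocks :: "'j set \<Rightarrow> 'j set set" where "blocks D = (\<lambda>a. orb D a \<inter> A) ` (A \<inter> D)"

lemma Dset_sym: "Dset X FE Y FE' = Dset Y FE' X FE" unfolding Dset_def by auto

lemma Dset_J: "Dset X FE Y FE' \<subseteq> J" unfolding Dset_def by auto

lemma Dset_ecl:
  assumes "X \<subseteq> A" "FE \<subseteq> E" "Y \<subseteq> A" "FE' \<subseteq> E"
  shows "ecl (Dset X FE Y FE')"
  unfolding ecl_def
proof (intro ballI impI)
  fix e j j' assume h: "e \<in> E" "j \<in> e" "j' \<in> e" "j \<in> Dset X FE Y FE'"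
  have "j' \<in> J" using Esub h by blast
  moreover have "(j' \<in> cov X FE) = (j \<in> cov X FE)" using cov_edge[OF assms(1,2) h(1)] h by simp
  moreover have "(j' \<in> cov Y FE') = (j \<in> cov Y FE')" using cov_edge[OF assms(3,4) h(1)] h by simp
  ultimately show "j' \<in> Dset X FE Y FE'" using h(4) unfolding Dset_def by simp
qed

lemma Dset_vok:
  assumes g1: "good X FE" and g2: "good Y FE'"
  shows "vok (Dset X FE Y FE')"
  unfolding vok_def
proof (intro ballI impI)
  let ?D = "Dset X FE Y FE'"
  fix j1 j2 j3 assume h: "j1 \<in> ?D" "j2 \<in> ?D" "j3 \<in> ?D" "inc j1 = inc j2 \<and> inc j2 = inc j3"
  have c1: "a = b" if "a \<in> ?D" "b \<in> ?D" "inc a = inc b" "a \<in> cov X FE" "b \<in> cov X FE" for a b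
    using good_inj[OF g1, of a b] that Dset_J by blast
  have c2: "a = b" if "a \<in> ?D" "b \<in> ?D" "inc a = inc b" "a \<notin> cov X FE" "b \<notin> cov X FE" for a b
  proof -
    have "a \<in> cov Y FE'" "b \<in> cov Y FE'" using that unfolding Dset_def by auto
    then show ?thesis using good_inj[OF g2, of a b] that Dset_J by blast
  qed
  consider "j1 \<in> cov X FE \<and> j2 \<in> cov X FE" | "j1 \<notin> cov X FE \<and> j2 \<notin> cov X FE"
    | "j2 \<in> cov X FE \<and> j3 \<in> cov X FE" | "j2 \<notin> cov X FE \<and> j3 \<notin> cov X FE"
    | "j1 \<in> cov X FE \<and> j3 \<in> cov X FE" | "j1 \<notin> cov X FE \<and> j3 \<notin> cov X FE" by blast
  then show "j1 = j2 \<or> j2 = j3 \<or> j1 = j3"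
  proof cases
    case 1 then show ?thesis using c1[of j1 j2] h by simp
  next
    case 2 then show ?thesis using c2[of j1 j2] h by simp
  next
    case 3 then show ?thesis using c1[of j2 j3] h by simp
  next
    case 4 then show ?thesis using c2[of j2 j3] h by simp
  next
    case 5 then show ?thesis using c1[of j1 j3] h by simp
  next
    case 6 then show ?thesis using c2[of j1 j3] h by simp
  qed
qed

lemma sg_invx: "ecl D \<Longrightarrow> \<forall>x. sg D (sg D x) = x" using sg_inv by blast
lemma tu_invx: "vok D \<Longrightarrow> \<forall>x. tu D (tu D x) = x" using tu_inv by blast

lemma orb_D:
  assumes "ecl D" "vok D" "a \<in> D"
  shows "orb D a \<subseteq> D"
proof -
  have "((tu D \<circ> sg D)^^k) a \<in> D" for k
  proof (induction k)
    case 0 then show ?case using assms by simp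
  next
    case (Suc k) then show ?case using sg_D[OF assms(1)] tu_D[OF assms(2)] by simp
  qed
  then show ?thesis unfolding orb_def rorb_def by blast
qed

lemma orb_fin:
  assumes "ecl D" "vok D" "a \<in> D" "D \<subseteq> J"
  shows "finite (orb D a)"
proof (rule finite_subset[OF _ finJ])
  show "orb D a \<subseteq> J" using orb_D[OF assms(1-3)] assms(4) by (rule subset_trans)
qed

lemma orb_self: "a \<in> orb D a"
  unfolding orb_def rorb_def by (rule range_eqI[where x=0]) simp

lemma orb_closed:
  assumes "ecl D" "vok D" "a \<in> A \<inter> D" "D \<subseteq> J" "x \<in> orb D a"
  shows "sg D x \<in> orb D a" "tu D x \<in> orb D a"
proof -
  have fin: "finite (rorb (tu D \<circ> sg D) a)" using orb_fin[OF assms(1,2) _ assms(4)] assms(3)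
    unfolding orb_def by blast
  have fa: "sg D a = a" using sg_A assms(3) by blast
  have x: "x \<in> rorb (tu D \<circ> sg D) a" using assms(5) unfolding orb_def .
  have s: "\<And>x. sg D (sg D x) = x" by (rule sg_inv[OF assms(1)])
  have t: "\<And>x. tu D (tu D x) = x" by (rule tu_inv[OF assms(2)])
  show "sg D x \<in> orb D a" unfolding orb_def by (rule dih_closed(1)[OF s t fin fa x])
  show "tu D x \<in> orb D a" unfolding orb_def by (rule dih_closed(2)[OF s t fin fa x])
qed

lemma orb_card:
  assumes "ecl D" "vok D" "a \<in> A \<inter> D" "D \<subseteq> J"
  shows "card {x \<in> orb D a. sg D x = x} \<le> 2"
proof -
  have fin: "finite (rorb (tu D \<circ> sg D) a)" using orb_fin[OF assms(1,2) _ assms(4)] assms(3)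
    unfolding orb_def by blast
  have fa: "sg D a = a" using sg_A assms(3) by blast
  have s: "\<And>x. sg D (sg D x) = x" by (rule sg_inv[OF assms(1)])
  have t: "\<And>x. tu D (tu D x) = x" by (rule tu_inv[OF assms(2)])
  show ?thesis unfolding orb_def by (rule dih_fix[OF s t fin fa])
qed

lemma orb_eq:
  assumes "ecl D" "vok D" "a \<in> D" "D \<subseteq> J" "x \<in> orb D a"
  shows "orb D x = orb D a"
proof -
  have fin: "finite (rorb (tu D \<circ> sg D) a)" using orb_fin[OF assms(1,2,3,4)] unfolding orb_def .
  have s: "\<And>x. sg D (sg D x) = x" by (rule sg_inv[OF assms(1)])
  have t: "\<And>x. tu D (tu D x) = x" by (rule tu_inv[OF assms(2)])
  have inj: "inj (tu D \<circ> sg D)"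
    using inv_inj[of "sg D", OF s] inv_inj[of "tu D", OF t] by (simp add: inj_compose)
  have x: "x \<in> rorb (tu D \<circ> sg D) a" using assms(5) unfolding orb_def .
  show ?thesis unfolding orb_def by (rule rorb_eq[OF inj fin x])
qed

lemma blocks_match:
  assumes "ecl D" "vok D" "D \<subseteq> J"
  shows "blocks D \<in> Match' (A \<inter> D)"
  unfolding Match'_def
proof (intro CollectI conjI ballI impI)
  fix S assume "S \<in> blocks D"
  then obtain a where a: "a \<in> A \<inter> D" "S = orb D a \<inter> A" unfolding blocks_def by blast
  have sub: "orb D a \<subseteq> D" using orb_D[OF assms(1,2)] a by blast
  then show "S \<subseteq> A \<inter> D" using a by blast
  have finS: "finite S" using orb_fin[OF assms(1,2) _ assms(3)] a by blast
  have "a \<in> S" using a orb_self by blast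
  then have c1: "card S \<ge> 1" using finS by (metis One_nat_def Suc_leI card_gt_0_iff empty_iff)
  have "S \<subseteq> {x \<in> orb D a. sg D x = x}" using a sg_A by blast
  moreover have "finite {x \<in> orb D a. sg D x = x}" using orb_fin[OF assms(1,2) _ assms(3)] a by simp
  ultimately have "card S \<le> card {x \<in> orb D a. sg D x = x}" by (rule card_mono[rotated])
  then have "card S \<le> 2" using orb_card[OF assms(1,2) a(1) assms(3)] by simp
  then show "card S = 1 \<or> card S = 2" using c1 by linarith
next
  fix S T assume h: "S \<in> blocks D" "T \<in> blocks D" "S \<noteq> T"
  then obtain a b where a: "a \<in> A \<inter> D" "S = orb D a \<inter> A" and b: "b \<in> A \<inter> D" "T = orb D b \<inter> A"
    unfolding blocks_def by blast
  show "S \<inter> T = {}"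
  proof (rule ccontr)
    assume "S \<inter> T \<noteq> {}"
    then obtain c where c: "c \<in> orb D a" "c \<in> orb D b" using a b by blast
    have "orb D c = orb D a" using orb_eq[OF assms(1,2) _ assms(3) c(1)] a by blast
    moreover have "orb D c = orb D b" using orb_eq[OF assms(1,2) _ assms(3) c(2)] b by blast
    ultimately have "S = T" using a b by simp
    then show False using h by simp
  qed
next
  show "\<Union> (blocks D) = A \<inter> D"
  proof
    show "\<Union> (blocks D) \<subseteq> A \<inter> D" unfolding blocks_def using orb_D[OF assms(1,2)] by blast
    show "A \<inter> D \<subseteq> \<Union> (blocks D)" unfolding blocks_def using orb_self by blast
  qed
qed

lemma A_Dset:
  assumes "X \<subseteq> A" "Y \<subseteq> A" "FE \<subseteq> E" "FE' \<subseteq> E"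
  shows "A \<inter> Dset X FE Y FE' = (X - Y) \<union> (Y - X)"
  using assms cov_A[OF assms(3)] cov_A[OF assms(4)] AJ unfolding Dset_def by blast

end


context mc begin

definition flipE :: "'j set \<Rightarrow> 'j set set \<Rightarrow> 'j set set \<Rightarrow> 'j set set" where
  "flipE C F1 F2 = {e\<in>F1. e \<inter> C = {}} \<union> {e\<in>F2. e \<inter> C \<noteq> {}}"

definition symd :: "'j set \<Rightarrow> 'j set \<Rightarrow> 'j set" where "symd X S = (X - S) \<union> (S - X)"

lemma flipE_sub: "F1 \<subseteq> E \<Longrightarrow> F2 \<subseteq> E \<Longrightarrow> flipE C F1 F2 \<subseteq> E"
  unfolding flipE_def by blast

lemma cov_flip:
  assumes X: "X \<subseteq> A" and Y: "Y \<subseteq> A" and F: "FE \<subseteq> E" and F': "FE' \<subseteq> E"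
    and C: "C \<subseteq> Dset X FE Y FE'" and Cs: "\<forall>x\<in>C. sg (Dset X FE Y FE') x \<in> C"
    and CA: "C \<inter> A = S" and j: "j \<in> J"
  shows "j \<in> cov (symd X S) (flipE C FE FE') \<longleftrightarrow> (if j \<in> C then j \<in> cov Y FE' else j \<in> cov X FE)"
proof (cases "j \<in> A")
  case True
  have F1: "flipE C FE FE' \<subseteq> E" using flipE_sub[OF F F'] .
  have e1: "j \<in> cov (symd X S) (flipE C FE FE') \<longleftrightarrow> j \<in> symd X S" using cov_A[OF F1 True] .
  have e2: "j \<in> cov X FE \<longleftrightarrow> j \<in> X" using cov_A[OF F True] .
  have e3: "j \<in> cov Y FE' \<longleftrightarrow> j \<in> Y" using cov_A[OF F' True] .
  show ?thesis
  proof (cases "j \<in> C")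
    case jC: True
    then have "j \<in> S" using CA True by blast
    moreover have "(j \<in> X) \<noteq> (j \<in> Y)" using C jC e2 e3 unfolding Dset_def by blast
    ultimately show ?thesis using e1 e3 jC by (auto simp: symd_def)
  next
    case jC: False
    then have "j \<notin> S" using CA by blast
    then show ?thesis using e1 e2 jC by (auto simp: symd_def)
  qed
next
  case False
  then obtain e where e: "e \<in> E" "j \<in> e" using EU j by blast
  have XS: "symd X S \<subseteq> A" using X CA unfolding symd_def by blast
  have F1: "flipE C FE FE' \<subseteq> E" using flipE_sub[OF F F'] .
  have e1: "j \<in> cov (symd X S) (flipE C FE FE') \<longleftrightarrow> e \<in> flipE C FE FE'" using cov_edge[OF XS F1 e] .
  have e2: "j \<in> cov X FE \<longleftrightarrow> e \<in> FE" using cov_edge[OF X F e] .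
  have e3: "j \<in> cov Y FE' \<longleftrightarrow> e \<in> FE'" using cov_edge[OF Y F' e] .
  show ?thesis
  proof (cases "j \<in> C")
    case jC: True
    then have "e \<inter> C \<noteq> {}" using e by blast
    then have "e \<in> flipE C FE FE' \<longleftrightarrow> e \<in> FE'" unfolding flipE_def by blast
    then show ?thesis using e1 e3 jC by simp
  next
    case jC: False
    have "e \<inter> C = {}"
    proof (rule ccontr)
      assume "e \<inter> C \<noteq> {}"
      then obtain j0 where j0: "j0 \<in> e" "j0 \<in> C" by blast
      then have "j0 \<noteq> j" using jC by blast
      then have "j = sg (Dset X FE Y FE') j0" using sg_edge[of j0 _ e j] j0 C e by blast
      then have "j \<in> C" using Cs j0 by simp
      then show False using jC by simp
    qed
    then have "e \<in> flipE C FE FE' \<longleftrightarrow> e \<in> FE" unfolding flipE_def by blast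
    then show ?thesis using e1 e2 jC by simp
  qed
qed

lemma deg_flip:
  assumes X: "X \<subseteq> A" and Y: "Y \<subseteq> A" and F: "FE \<subseteq> E" and F': "FE' \<subseteq> E"
    and C: "C \<subseteq> Dset X FE Y FE'" and Cs: "\<forall>x\<in>C. sg (Dset X FE Y FE') x \<in> C"
    and Ct: "\<forall>x\<in>C. tu (Dset X FE Y FE') x \<in> C" and vk: "vok (Dset X FE Y FE')"
    and CA: "C \<inter> A = S"
  shows "deg J inc (symd X S) (flipE C FE FE') v =
     (if \<exists>j\<in>C. inc j = v then deg J inc Y FE' v else deg J inc X FE v)"
proof (cases "\<exists>j\<in>C. inc j = v")
  case True
  then obtain j0 where j0: "j0 \<in> C" "inc j0 = v" by blast
  have "{j\<in>J. inc j = v \<and> j \<in> cov (symd X S) (flipE C FE FE')} = {j\<in>J. inc j = v \<and> j \<in> cov Y FE'}"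
  proof (intro Collect_cong conj_cong refl)
    fix j assume j: "j \<in> J" "inc j = v"
    show "j \<in> cov (symd X S) (flipE C FE FE') \<longleftrightarrow> j \<in> cov Y FE'"
    proof (cases "j \<in> C")
      case True then show ?thesis using cov_flip[OF X Y F F' C Cs CA j(1)] by simp
    next
      case False
      have "j \<notin> Dset X FE Y FE'"
      proof
        assume jD: "j \<in> Dset X FE Y FE'"
        have "j0 \<in> Dset X FE Y FE'" using C j0 by blast
        moreover have "j \<noteq> j0" using False j0 by blast
        ultimately have "tu (Dset X FE Y FE') j0 = j" using tu_vert[OF vk _ jD] j j0 by simp
        then have "j \<in> C" using Ct j0 by metis
        then show False using False by simp
      qed
      then have "(j \<in> cov X FE) = (j \<in> cov Y FE')" using j unfolding Dset_def by blast
      then show ?thesis using cov_flip[OF X Y F F' C Cs CA j(1)] False by simp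
    qed
  qed
  then show ?thesis using True unfolding deg_cov by simp
next
  case False
  have "{j\<in>J. inc j = v \<and> j \<in> cov (symd X S) (flipE C FE FE')} = {j\<in>J. inc j = v \<and> j \<in> cov X FE}"
  proof (intro Collect_cong conj_cong refl)
    fix j assume j: "j \<in> J" "inc j = v"
    then have "j \<notin> C" using False by blast
    then show "j \<in> cov (symd X S) (flipE C FE FE') \<longleftrightarrow> j \<in> cov X FE"
      using cov_flip[OF X Y F F' C Cs CA j(1)] by simp
  qed
  then show ?thesis using False unfolding deg_cov by simp
qed

end


context mc begin

definition Cof :: "'j set \<Rightarrow> 'j set \<Rightarrow> 'j set" where "Cof D S = \<Union> (orb D ` S)"

definition hflip :: "'j set \<Rightarrow> 'j set \<Rightarrow> 'j set \<Rightarrow> 'j set set \<times> 'j set set \<Rightarrow> 'j set set \<times> 'j set set" where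
  "hflip X Y S p = (let C = Cof (Dset X (fst p) Y (snd p)) S in (flipE C (fst p) (snd p), flipE C (snd p) (fst p)))"

lemma C_props:
  assumes ec: "ecl D" and vk: "vok D" and DJ: "D \<subseteq> J" and S: "S \<in> blocks D"
  shows "Cof D S \<subseteq> D" "\<forall>x\<in>Cof D S. sg D x \<in> Cof D S" "\<forall>x\<in>Cof D S. tu D x \<in> Cof D S"
    "Cof D S \<inter> A = S"
proof -
  obtain a0 where a0: "a0 \<in> A \<inter> D" "S = orb D a0 \<inter> A" using S unfolding blocks_def by blast
  have "Cof D S = orb D a0"
  proof
    show "Cof D S \<subseteq> orb D a0"
    proof
      fix x assume "x \<in> Cof D S"
      then obtain a where a: "a \<in> S" "x \<in> orb D a" unfolding Cof_def by blast
      have "orb D a = orb D a0" using orb_eq[OF ec vk _ DJ, of a0 a] a a0 by blast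
      then show "x \<in> orb D a0" using a by simp
    qed
    show "orb D a0 \<subseteq> Cof D S" unfolding Cof_def using a0 orb_self[of a0 D] by blast
  qed
  then show "Cof D S \<subseteq> D" "\<forall>x\<in>Cof D S. sg D x \<in> Cof D S" "\<forall>x\<in>Cof D S. tu D x \<in> Cof D S"
    "Cof D S \<inter> A = S"
    using orb_D[OF ec vk, of a0] orb_closed[OF ec vk a0(1) DJ] a0 by auto
qed

lemma prod_split: "finite F \<Longrightarrow> prod f F = prod f {e\<in>F. P e} * prod f {e\<in>F. \<not> P e}"
proof -
  assume fF: "finite F"
  have "F = {e\<in>F. P e} \<union> {e\<in>F. \<not> P e}" by blast
  then have "prod f F = prod f ({e\<in>F. P e} \<union> {e\<in>F. \<not> P e})" by simp
  also have "\<dots> = prod f {e\<in>F. P e} * prod f {e\<in>F. \<not> P e}"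
    by (rule prod.union_disjoint) (use fF in auto)
  finally show ?thesis .
qed

lemma flip_main:
  assumes X: "X \<subseteq> A" and Y: "Y \<subseteq> A" and F: "FE \<subseteq> E" and F': "FE' \<subseteq> E"
    and g1: "good X FE" and g2: "good Y FE'" and S: "S \<in> blocks (Dset X FE Y FE')"
  defines "D \<equiv> Dset X FE Y FE'"
  defines "C \<equiv> Cof D S"
  defines "F1 \<equiv> flipE C FE FE'" and "F2 \<equiv> flipE C FE' FE"
  shows "hflip X Y S (FE, FE') = (F1, F2)" "F1 \<subseteq> E" "F2 \<subseteq> E"
    "Dset (symd X S) F1 (symd Y S) F2 = D"
    "good (symd X S) F1" "good (symd Y S) F2"
    "wt J V inc w lam (symd X S) F1 * wt J V inc w lam (symd Y S) F2 = wt J V inc w lam X FE * wt J V inc w lam Y FE'"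
    "flipE C F1 F2 = FE" "flipE C F2 F1 = FE'"
    "symd (symd X S) S = X" "symd (symd Y S) S = Y" "symd X S \<subseteq> A" "symd Y S \<subseteq> A"
proof -
  have ec: "ecl D" unfolding D_def using Dset_ecl[OF X F Y F'] .
  have vk: "vok D" unfolding D_def using Dset_vok[OF g1 g2] .
  have DJ: "D \<subseteq> J" unfolding D_def by (rule Dset_J)
  have Sb: "S \<in> blocks D" using S unfolding D_def .
  note Cp = C_props[OF ec vk DJ Sb, folded C_def]
  have SA: "S \<subseteq> A" using Cp(4) by blast
  have D': "Dset Y FE' X FE = D" unfolding D_def by (rule Dset_sym[symmetric])
  have C1: "C \<subseteq> Dset X FE Y FE'" using Cp(1) unfolding D_def .
  have C2: "C \<subseteq> Dset Y FE' X FE" using Cp(1) unfolding D' .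
  have Cs1: "\<forall>x\<in>C. sg (Dset X FE Y FE') x \<in> C" using Cp(2) unfolding D_def .
  have Cs2: "\<forall>x\<in>C. sg (Dset Y FE' X FE) x \<in> C" using Cp(2) unfolding D' .
  have Ct1: "\<forall>x\<in>C. tu (Dset X FE Y FE') x \<in> C" using Cp(3) unfolding D_def .
  have Ct2: "\<forall>x\<in>C. tu (Dset Y FE' X FE) x \<in> C" using Cp(3) unfolding D' .
  have vk1: "vok (Dset X FE Y FE')" using vk unfolding D_def .
  have vk2: "vok (Dset Y FE' X FE)" using vk unfolding D' .
  note cf1 = cov_flip[OF X Y F F' C1 Cs1 Cp(4), folded F1_def]
  note cf2 = cov_flip[OF Y X F' F C2 Cs2 Cp(4), folded F2_def]
  note df1 = deg_flip[OF X Y F F' C1 Cs1 Ct1 vk1 Cp(4), folded F1_def]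
  note df2 = deg_flip[OF Y X F' F C2 Cs2 Ct2 vk2 Cp(4), folded F2_def]
  show "hflip X Y S (FE, FE') = (F1, F2)"
    unfolding hflip_def F1_def F2_def C_def D_def by (simp add: Let_def)
  show E1: "F1 \<subseteq> E" unfolding F1_def using flipE_sub[OF F F'] .
  show E2: "F2 \<subseteq> E" unfolding F2_def using flipE_sub[OF F' F] .
  show "Dset (symd X S) F1 (symd Y S) F2 = D"
  proof
    show "Dset (symd X S) F1 (symd Y S) F2 \<subseteq> D"
    proof
      fix j assume j: "j \<in> Dset (symd X S) F1 (symd Y S) F2"
      then have jJ: "j \<in> J" unfolding Dset_def by blast
      show "j \<in> D" using j cf1[OF jJ] cf2[OF jJ] jJ unfolding Dset_def D_def by (auto split: if_splits)
    qed
    show "D \<subseteq> Dset (symd X S) F1 (symd Y S) F2"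
    proof
      fix j assume j: "j \<in> D"
      then have jJ: "j \<in> J" unfolding Dset_def D_def by blast
      show "j \<in> Dset (symd X S) F1 (symd Y S) F2"
        using j cf1[OF jJ] cf2[OF jJ] jJ unfolding Dset_def D_def by (auto split: if_splits)
    qed
  qed
  have gd1: "deg J inc X FE v \<le> 1" if "v \<in> V" for v using g1 that unfolding good_def by blast
  have gd2: "deg J inc Y FE' v \<le> 1" if "v \<in> V" for v using g2 that unfolding good_def by blast
  show G1: "good (symd X S) F1" unfolding good_def using df1 gd1 gd2 by simp
  show G2: "good (symd Y S) F2" unfolding good_def using df2 gd1 gd2 by simp
  define VC where "VC = {v. \<exists>j\<in>C. inc j = v}"
  define Z where "Z = {v\<in>V. deg J inc X FE v = 0}"
  define Z' where "Z' = {v\<in>V. deg J inc Y FE' v = 0}"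
  define Z1 where "Z1 = {v\<in>V. deg J inc (symd X S) F1 v = 0}"
  define Z2 where "Z2 = {v\<in>V. deg J inc (symd Y S) F2 v = 0}"
  have fZ: "finite Z" "finite Z'" "finite Z1" "finite Z2"
    unfolding Z_def Z'_def Z1_def Z2_def using finV by simp_all
  have z1a: "Z1 \<inter> VC = Z' \<inter> VC" unfolding Z1_def Z'_def VC_def using df1 by auto
  have z1b: "Z1 - VC = Z - VC" unfolding Z1_def Z_def VC_def using df1 by auto
  have z2a: "Z2 \<inter> VC = Z \<inter> VC" unfolding Z2_def Z_def VC_def using df2 by auto
  have z2b: "Z2 - VC = Z' - VC" unfolding Z2_def Z'_def VC_def using df2 by auto
  have L: "prod lam Z1 * prod lam Z2 = prod lam Z * prod lam Z'"
  proof -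
    have "prod lam Z1 * prod lam Z2 = (prod lam (Z1 \<inter> VC) * prod lam (Z1 - VC)) * (prod lam (Z2 \<inter> VC) * prod lam (Z2 - VC))"
      using prod.Int_Diff[OF fZ(3), of lam VC] prod.Int_Diff[OF fZ(4), of lam VC] by simp
    also have "\<dots> = (prod lam (Z' \<inter> VC) * prod lam (Z - VC)) * (prod lam (Z \<inter> VC) * prod lam (Z' - VC))"
      using z1a z1b z2a z2b by simp
    also have "\<dots> = (prod lam (Z \<inter> VC) * prod lam (Z - VC)) * (prod lam (Z' \<inter> VC) * prod lam (Z' - VC))"
      by (simp add: mult_ac)
    also have "\<dots> = prod lam Z * prod lam Z'"
      using prod.Int_Diff[OF fZ(1), of lam VC] prod.Int_Diff[OF fZ(2), of lam VC] by simp
    finally show ?thesis .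
  qed
  have fF: "finite FE" "finite FE'" using F F' finE finite_subset by auto
  have W: "prod w F1 * prod w F2 = prod w FE * prod w FE'"
  proof -
    have u1: "prod w F1 = prod w {e\<in>FE. e \<inter> C = {}} * prod w {e\<in>FE'. e \<inter> C \<noteq> {}}"
      unfolding F1_def flipE_def by (rule prod.union_disjoint) (use fF in auto)
    have u2: "prod w F2 = prod w {e\<in>FE'. e \<inter> C = {}} * prod w {e\<in>FE. e \<inter> C \<noteq> {}}"
      unfolding F2_def flipE_def by (rule prod.union_disjoint) (use fF in auto)
    have s1: "prod w FE = prod w {e\<in>FE. e \<inter> C = {}} * prod w {e\<in>FE. \<not> e \<inter> C = {}}"
      by (rule prod_split[OF fF(1)])
    have s2: "prod w FE' = prod w {e\<in>FE'. e \<inter> C = {}} * prod w {e\<in>FE'. \<not> e \<inter> C = {}}"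
      by (rule prod_split[OF fF(2)])
    show ?thesis unfolding u1 u2 s1 s2 by (simp add: mult_ac)
  qed
  have wt1: "wt J V inc w lam (symd X S) F1 = prod lam Z1 * prod w F1" unfolding Z1_def using wt_good[OF G1] .
  have wt2: "wt J V inc w lam (symd Y S) F2 = prod lam Z2 * prod w F2" unfolding Z2_def using wt_good[OF G2] .
  have wt3: "wt J V inc w lam X FE = prod lam Z * prod w FE" unfolding Z_def using wt_good[OF g1] .
  have wt4: "wt J V inc w lam Y FE' = prod lam Z' * prod w FE'" unfolding Z'_def using wt_good[OF g2] .
  have "(prod lam Z1 * prod w F1) * (prod lam Z2 * prod w F2) = (prod lam Z1 * prod lam Z2) * (prod w F1 * prod w F2)"
    by (simp add: mult_ac)
  also have "\<dots> = (prod lam Z * prod lam Z') * (prod w FE * prod w FE')" using L W by simp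
  also have "\<dots> = (prod lam Z * prod w FE) * (prod lam Z' * prod w FE')" by (simp add: mult_ac)
  finally show "wt J V inc w lam (symd X S) F1 * wt J V inc w lam (symd Y S) F2 = wt J V inc w lam X FE * wt J V inc w lam Y FE'"
    unfolding wt1 wt2 wt3 wt4 .
  show "flipE C F1 F2 = FE" unfolding F1_def F2_def flipE_def by auto
  show "flipE C F2 F1 = FE'" unfolding F1_def F2_def flipE_def by auto
  show "symd (symd X S) S = X" "symd (symd Y S) S = Y" unfolding symd_def by auto
  show "symd X S \<subseteq> A" "symd Y S \<subseteq> A" using X Y SA unfolding symd_def by auto
qed

end


context mc begin

definition PP :: "'j set \<Rightarrow> 'j set \<Rightarrow> 'j set set \<Rightarrow> ('j set set \<times> 'j set set) set" where
  "PP X Y M = {p \<in> Pow E \<times> Pow E. good X (fst p) \<and> good Y (snd p) \<and> blocks (Dset X (fst p) Y (snd p)) = M}"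

definition Bf :: "'j set \<Rightarrow> 'j set \<Rightarrow> 'j set set \<Rightarrow> rat" where
  "Bf X Y M = (\<Sum>p\<in>PP X Y M. wt J V inc w lam X (fst p) * wt J V inc w lam Y (snd p))"

lemma finPE: "finite (Pow E \<times> Pow E)" using finE by simp

lemma flip_PP:
  assumes X: "X \<subseteq> A" and Y: "Y \<subseteq> A" and p: "p \<in> PP X Y M" and S: "S \<in> M"
  shows "hflip X Y S p \<in> PP (symd X S) (symd Y S) M"
    "hflip (symd X S) (symd Y S) S (hflip X Y S p) = p"
    "wt J V inc w lam (symd X S) (fst (hflip X Y S p)) * wt J V inc w lam (symd Y S) (snd (hflip X Y S p))
     = wt J V inc w lam X (fst p) * wt J V inc w lam Y (snd p)"
proof -
  obtain FE FE' where pe: "p = (FE, FE')" by (cases p)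
  have F: "FE \<subseteq> E" "FE' \<subseteq> E" and g: "good X FE" "good Y FE'"
    and M: "blocks (Dset X FE Y FE') = M" using p unfolding PP_def pe by auto
  have Sb: "S \<in> blocks (Dset X FE Y FE')" using S M by simp
  note fm = flip_main[OF X Y F(1) F(2) g(1) g(2) Sb]
  define C where "C = Cof (Dset X FE Y FE') S"
  define F1 where "F1 = flipE C FE FE'"
  define F2 where "F2 = flipE C FE' FE"
  note fm = fm[folded C_def, folded F1_def F2_def]
  have h: "hflip X Y S p = (F1, F2)" using fm(1) pe by simp
  show "hflip X Y S p \<in> PP (symd X S) (symd Y S) M"
    unfolding h PP_def using fm(2-6) M by simp
  have "hflip (symd X S) (symd Y S) S (F1, F2) = (flipE C F1 F2, flipE C F2 F1)"
    unfolding hflip_def C_def using fm(4) by (simp add: Let_def)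
  then show "hflip (symd X S) (symd Y S) S (hflip X Y S p) = p"
    unfolding h using fm(8,9) pe by simp
  show "wt J V inc w lam (symd X S) (fst (hflip X Y S p)) * wt J V inc w lam (symd Y S) (snd (hflip X Y S p))
     = wt J V inc w lam X (fst p) * wt J V inc w lam Y (snd p)"
    unfolding pe fm(1) using fm(7) by simp
qed

lemma PP_blocks_A:
  assumes "p \<in> PP X Y M" "S \<in> M" shows "S \<subseteq> A"
  using assms unfolding PP_def blocks_def by auto

lemma windable_sig: "windable A (signature J V inc A E w lam)"
  unfolding windable_def
proof (intro exI[of _ Bf] conjI allI impI ballI)
  fix X Y M assume X: "X \<subseteq> A" and Y: "Y \<subseteq> A" and "M \<in> Match' ((X - Y) \<union> (Y - X))"
  show "0 \<le> Bf X Y M" unfolding Bf_def PP_def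
    by (rule sum_nonneg) (auto intro!: mult_nonneg_nonneg wt_nn)
next
  fix X Y assume X: "X \<subseteq> A" and Y: "Y \<subseteq> A"
  let ?f = "\<lambda>p. wt J V inc w lam X (fst p) * wt J V inc w lam Y (snd p)"
  define G where "G = {p \<in> Pow E \<times> Pow E. good X (fst p) \<and> good Y (snd p)}"
  define Z where "Z = (X - Y) \<union> (Y - X)"
  have "signature J V inc A E w lam X * signature J V inc A E w lam Y
      = (\<Sum>FE\<in>Pow E. \<Sum>FE'\<in>Pow E. wt J V inc w lam X FE * wt J V inc w lam Y FE')"
    unfolding signature_def by (rule sum_product)
  also have "\<dots> = (\<Sum>p\<in>Pow E \<times> Pow E. ?f p)"
    by (simp add: sum.cartesian_product case_prod_beta)
  also have "\<dots> = sum ?f G"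
  proof (rule sum.mono_neutral_right[OF finPE])
    show "G \<subseteq> Pow E \<times> Pow E" unfolding G_def by blast
    show "\<forall>i\<in>Pow E \<times> Pow E - G. ?f i = 0" unfolding G_def using wt_bad by auto
  qed
  also have "\<dots> = (\<Sum>M\<in>Match' Z. sum ?f {p. p \<in> G \<and> blocks (Dset X (fst p) Y (snd p)) = M})"
  proof (rule sum.group[symmetric])
    show "finite G" using finPE unfolding G_def by simp
    have "finite Z" unfolding Z_def using X Y AJ finJ finite_subset by (metis Diff_subset finite_Un subset_trans)
    then show "finite (Match' Z)" unfolding Match'_def
      by (rule finite_subset[rotated, OF finite_Pow_iff[THEN iffD2, OF finite_Pow_iff[THEN iffD2]]]) blast
    show "(\<lambda>p. blocks (Dset X (fst p) Y (snd p))) ` G \<subseteq> Match' Z"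
    proof
      fix M assume "M \<in> (\<lambda>p. blocks (Dset X (fst p) Y (snd p))) ` G"
      then obtain p where p: "p \<in> G" "M = blocks (Dset X (fst p) Y (snd p))" by blast
      have F: "fst p \<subseteq> E" "snd p \<subseteq> E" "good X (fst p)" "good Y (snd p)" using p(1) unfolding G_def by auto
      have "blocks (Dset X (fst p) Y (snd p)) \<in> Match' (A \<inter> Dset X (fst p) Y (snd p))"
        using blocks_match[OF Dset_ecl[OF X F(1) Y F(2)] Dset_vok[OF F(3,4)] Dset_J] .
      then show "M \<in> Match' Z" using p(2) A_Dset[OF X Y F(1,2)] unfolding Z_def by simp
    qed
  qed
  also have "\<dots> = (\<Sum>M\<in>Match' Z. Bf X Y M)"
    unfolding Bf_def PP_def G_def by (intro sum.cong refl) (auto intro: sum.cong)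
  finally show "signature J V inc A E w lam X * signature J V inc A E w lam Y
     = (\<Sum>M\<in>Match' ((X - Y) \<union> (Y - X)). Bf X Y M)" unfolding Z_def .
next
  fix X Y M S assume X: "X \<subseteq> A" and Y: "Y \<subseteq> A" and "M \<in> Match' ((X - Y) \<union> (Y - X))" and S: "S \<in> M"
  let ?X1 = "symd X S" and ?Y1 = "symd Y S"
  show "Bf X Y M = Bf ((X - S) \<union> (S - X)) ((Y - S) \<union> (S - Y)) M"
    unfolding symd_def[symmetric] Bf_def
  proof (rule sum.reindex_bij_witness[where j = "hflip X Y S" and i = "hflip ?X1 ?Y1 S"])
    fix a assume a: "a \<in> PP X Y M"
    show "hflip ?X1 ?Y1 S (hflip X Y S a) = a" using flip_PP(2)[OF X Y a S] .
    show "hflip X Y S a \<in> PP ?X1 ?Y1 M" using flip_PP(1)[OF X Y a S] .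
    show "wt J V inc w lam ?X1 (fst (hflip X Y S a)) * wt J V inc w lam ?Y1 (snd (hflip X Y S a))
        = wt J V inc w lam X (fst a) * wt J V inc w lam Y (snd a)" using flip_PP(3)[OF X Y a S] .
  next
    fix b assume b: "b \<in> PP ?X1 ?Y1 M"
    have SA: "S \<subseteq> A" using PP_blocks_A[OF b S] .
    have X1: "?X1 \<subseteq> A" and Y1: "?Y1 \<subseteq> A" using X Y SA unfolding symd_def by auto
    have XX: "symd ?X1 S = X" and YY: "symd ?Y1 S = Y" unfolding symd_def by auto
    show "hflip X Y S (hflip ?X1 ?Y1 S b) = b" using flip_PP(2)[OF X1 Y1 b S] unfolding XX YY .
    show "hflip ?X1 ?Y1 S b \<in> PP X Y M" using flip_PP(1)[OF X1 Y1 b S] unfolding XX YY .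
  qed
qed

end


theorem lemma18:
  fixes J :: "'j set" and V :: "'v set" and inc :: "'j \<Rightarrow> 'v" and A :: "'j set"
    and E :: "'j set set" and w :: "'j set \<Rightarrow> rat" and lam :: "'v \<Rightarrow> rat"
  assumes "matchings_circuit J V inc A E w lam"
  shows "windable A (signature J V inc A E w lam)"
proof -
  interpret mc J V inc A E w lam using assms by unfold_locales
  show ?thesis by (rule windable_sig)
qed

end
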